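(* Let $(\mathcal{U},f,g,\preccurlyeq)$ be a fault-tolerance partially ordered $(m,n)$-semiring as described in the context, and let $x_1,\ldots,x_m,y_1,\ldots,y_n\in\mathcal{U}$ be disjoint components. Then (i) $f(x_1^m)\preccurlyeq f(f(x_1^m),f(x_1^m),\ldots,f(x_1^m))$ (with $m$ copies of $f(x_1^m)$); (ii) $g(g(y_1^n),g(y_1^n),\ldots,g(y_1^n))\preccurlyeq g(y_1^n)$ (with $n$ copies of $g(y_1^n)$).
   Context: Notation: $x_i^j$ denotes $x_i,\ldots,x_j$. $(\mathcal{U},f,g)$ is an $(m,n)$-semiring: $f$ is an associative $m$-ary and $g$ an associative $n$-ary operation on $\mathcal{U}$ (associativity of a $k$-ary $h$: $h(x_1^{i-1},h(x_i^{k+i-1}),x_{k+i}^{2k-1})=h(x_1^{j-1},h(x_j^{k+j-1}),x_{k+j}^{2k-1})$ for $1\le i\le j\le k$), and $g$ distributes over $f$ in every position. $\mathcal{U}$ is interpreted as a set of systems; $f(x_1^m)$ is the system that fails when any $x_i$ fails, $g(y_1^n)$ the system that fails only when all $y_j$ fail; elements are assumed to be disjoint components (failing independently), which imposes no further algebraic condition. $\mathbf{0}\in\mathcal{U}$ (the always-up system) is an $f$-identity ($f(\mathbf{0},\ldots,x,\ldots,\mathbf{0})=x$ in every position) and $\mathbf{1}$ (the always-down system) is a $g$-identity; moreover $g(y_1^{j-1},\mathbf{0},y_{j+1}^n)=\mathbf{0}$ and $f(x_1^{i-1},\mathbf{1},x_{i+1}^m)=\mathbf{1}$ for all arguments and positions.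 $\preccurlyeq$ is a partial order on $\mathcal{U}$ ("fault-tolerance partial order") such that $(\mathcal{U},f,g,\preccurlyeq)$ is a partially ordered $(m,n)$-semiring: $a\preccurlyeq b$ implies $f(x_1^{i-1},a,x_{i+1}^m)\preccurlyeq f(x_1^{i-1},b,x_{i+1}^m)$ and $g(y_1^{j-1},a,y_{j+1}^n)\preccurlyeq g(y_1^{j-1},b,y_{j+1}^n)$ for all arguments and all positions; and $\mathbf{0}\preccurlyeq a\preccurlyeq\mathbf{1}$ for all $a\in\mathcal{U}$. *)

theory Defs
  imports Main
begin

text \<open>A k-ary operation on the type 'a is modelled as a function on lists,
  only ever applied to lists of length k.\<close>

definition nary_assoc :: "nat \<Rightarrow> ('a list \<Rightarrow> 'a) \<Rightarrow> bool" where
  "nary_assoc k h \<longleftrightarrow>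
     (\<forall>xs i j. length xs = 2 * k - 1 \<and> i < k \<and> j < k \<longrightarrow>
        h (take i xs @ [h (take k (drop i xs))] @ drop (i + k) xs)
      = h (take j xs @ [h (take k (drop j xs))] @ drop (j + k) xs))"

definition distributes :: "nat \<Rightarrow> nat \<Rightarrow> ('a list \<Rightarrow> 'a) \<Rightarrow> ('a list \<Rightarrow> 'a) \<Rightarrow> bool" where
  "distributes m n f g \<longleftrightarrow>
     (\<forall>xs ys j. length xs = m \<and> length ys = n \<and> j < n \<longrightarrow>
        g (ys[j := f xs]) = f (map (\<lambda>x. g (ys[j := x])) xs))"

definition mn_semiring :: "nat \<Rightarrow> nat \<Rightarrow> ('a list \<Rightarrow> 'a) \<Rightarrow> ('a list \<Rightarrow> 'a) \<Rightarrow> bool" where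
  "mn_semiring m n f g \<longleftrightarrow> 2 \<le> m \<and> 2 \<le> n \<and> nary_assoc m f \<and> nary_assoc n g \<and> distributes m n f g"

text \<open>Fault-tolerance partially ordered (m,n)-semiring with the always-up system
  zero (identity of f, absorbing for g) and the always-down system one
  (identity of g, absorbing for f).\<close>
definition ft_po_mn_semiring ::
  "nat \<Rightarrow> nat \<Rightarrow> ('a list \<Rightarrow> 'a) \<Rightarrow> ('a list \<Rightarrow> 'a) \<Rightarrow> ('a \<Rightarrow> 'a \<Rightarrow> bool) \<Rightarrow> 'a \<Rightarrow> 'a \<Rightarrow> bool" where
  "ft_po_mn_semiring m n f g le zero one \<longleftrightarrow>
     mn_semiring m n f g
   \<and> (\<forall>x i. i < m \<longrightarrow> f ((replicate m zero)[i := x]) = x)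
   \<and> (\<forall>y j. j < n \<longrightarrow> g ((replicate n one)[j := y]) = y)
   \<and> (\<forall>ys j. length ys = n \<and> j < n \<longrightarrow> g (ys[j := zero]) = zero)
   \<and> (\<forall>xs i. length xs = m \<and> i < m \<longrightarrow> f (xs[i := one]) = one)
   \<and> reflp le \<and> transp le \<and> antisymp le
   \<and> (\<forall>a b xs i. le a b \<and> length xs = m \<and> i < m \<longrightarrow> le (f (xs[i := a])) (f (xs[i := b])))
   \<and> (\<forall>a b ys j. le a b \<and> length ys = n \<and> j < n \<longrightarrow> le (g (ys[j := a])) (g (ys[j := b])))
   \<and> (\<forall>a. le zero a \<and> le a one)"

end

theory Submission
  imports Defs
begin

lemma chain:
  assumes tr: "transp R" and rf: "reflp R"
    and mono: "\<forall>a b xs i. R a b \<and> length xs = m \<and> i < m \<longrightarrow> R (h (xs[i:=a])) (h (xs[i:=b]))"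
    and ac: "R a c"
  shows "1 \<le> k \<Longrightarrow> k \<le> m \<Longrightarrow> R (h (replicate k a @ replicate (m-k) c)) (h (a # replicate (m-1) c))"
proof (induction k)
  case 0 then show ?case by simp
next
  case (Suc k)
  show ?case
  proof (cases "k = 0")
    case True then show ?thesis using rf by (simp add: reflpD)
  next
    case False
    define L where "L = replicate k a @ replicate (m-k) c"
    have len: "length L = m" using Suc.prems by (simp add: L_def)
    have e1: "L[k := c] = L" using Suc.prems
      by (simp add: L_def list_update_append list_update_same_conv)
    have e2: "L[k := a] = replicate (Suc k) a @ replicate (m - Suc k) c"
    proof -
      obtain j where j: "m - k = Suc j" using Suc.prems by (metis Suc_diff_le Suc_le_D diff_Suc_Suc)
      have mj: "m - Suc k = j" using j by simp
      have "replicate (Suc k) a = replicate k a @ [a]" by (simp add: replicate_append_same)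
      then show ?thesis using j mj by (simp add: L_def list_update_append)
    qed
    have "R (h (L[k:=a])) (h (L[k:=c]))" using mono ac len Suc.prems by auto
    then have "R (h (replicate (Suc k) a @ replicate (m - Suc k) c)) (h L)" using e1 e2 by simp
    moreover have "R (h L) (h (a # replicate (m-1) c))" using Suc False by (simp add: L_def)
    ultimately show ?thesis using tr by (meson transpD)
  qed
qed

theorem theorem11:
  fixes f g :: "'a list \<Rightarrow> 'a" and le :: "'a \<Rightarrow> 'a \<Rightarrow> bool" and zero one :: 'a
    and m n :: nat and xs ys :: "'a list"
  assumes "ft_po_mn_semiring m n f g le zero one"
    and "length xs = m" and "length ys = n"
  shows "le (f xs) (f (replicate m (f xs))) \<and> le (g (replicate n (g ys))) (g ys)"
proof
  note A = assms(1)[unfolded ft_po_mn_semiring_def mn_semiring_def]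
  have m2: "2 \<le> m" and n2: "2 \<le> n" using A by auto
  have rf: "reflp le" and tr: "transp le" using A by auto
  have rep: "\<And>a z k. 1 \<le> k \<Longrightarrow> a # replicate (k-1) z = (replicate k z)[0 := a]"
    by (case_tac k) auto
  let ?a = "f xs"
  have "(\<lambda>x y. le y x) ?a zero" using A by auto
  moreover have "transp (\<lambda>x y. le y x)" using tr by (simp add: transp_def)
  moreover have "reflp (\<lambda>x y. le y x)" using rf by (simp add: reflp_def)
  moreover have "\<forall>a b xs i. (\<lambda>x y. le y x) a b \<and> length xs = m \<and> i < m \<longrightarrow>
      (\<lambda>x y. le y x) (f (xs[i:=a])) (f (xs[i:=b]))" using A by auto
  ultimately have "le (f (?a # replicate (m-1) zero)) (f (replicate m ?a @ replicate (m-m) zero))"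
    using chain[of "\<lambda>x y. le y x" m f ?a zero m] m2 by auto
  moreover have "f (?a # replicate (m-1) zero) = ?a" using A m2 rep[of m ?a zero] by auto
  ultimately show "le (f xs) (f (replicate m (f xs)))" by simp
next
  note A = assms(1)[unfolded ft_po_mn_semiring_def mn_semiring_def]
  have n2: "2 \<le> n" using A by auto
  have rf: "reflp le" and tr: "transp le" using A by auto
  have rep: "\<And>a z k. 1 \<le> k \<Longrightarrow> a # replicate (k-1) z = (replicate k z)[0 := a]"
    by (case_tac k) auto
  let ?a = "g ys"
  have "le ?a one" using A by auto
  moreover have "\<forall>a b xs i. le a b \<and> length xs = n \<and> i < n \<longrightarrow>
      le (g (xs[i:=a])) (g (xs[i:=b]))" using A by auto
  ultimately have "le (g (replicate n ?a @ replicate (n-n) one)) (g (?a # replicate (n-1) one))"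
    using chain[of le n g ?a one n] n2 rf tr by auto
  moreover have "g (?a # replicate (n-1) one) = ?a" using A n2 rep[of n ?a one] by auto
  ultimately show "le (g (replicate n (g ys))) (g ys)" by simp
qed

end
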